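(* Let $f:\mathbb{R}^n\to\mathbb{R}$ be bounded below and continuously differentiable with $\nabla f$ Lipschitz with constant $L_{\nabla f}$, where $f(z)=\mathbb{E}_\omega[f(z,\omega)]$ and $\mathrm{Var}_\omega(f(z,\omega))\le\sigma^2$ for all $z\in\mathbb{R}^n$. Let $x\in\mathbb{R}^n$, $\Delta>0$, $p=n+1$, points $y_1,\ldots,y_p$ with $\|y_i-x\|\le\beta\Delta$ for some $\beta>0$ and all $i$, and let $\hat M$ with rows $[1,((y_i-x)/\Delta)^T]$ be invertible. For each $i$, let $\bar f_N(y_i)=\frac1N\sum_{j=1}^Nf(y_i,\omega_{i,j})$ with all $\omega_{i,j}$ i.i.d. realizations of $\omega$ (independent across $i$ and $j$), and define $c,g$ by $\hat M\begin{bmatrix}c\\ \Delta g\end{bmatrix}=\begin{bmatrix}\bar f_N(y_1)\\ \vdots\\ \bar f_N(y_p)\end{bmatrix}$, $m(y)=c+g^T(y-x)$. If $N\ge\frac{\sigma^2}{\epsilon_f^2(1-\alpha_m^{1/p})\Delta^4}$ for some $\epsilon_f>0$ and $\alpha_m\in(0,1)$, then with probability at least $\alpha_m$, for all $y\in B(x,\Delta)$ we have $|m(y)-f(y)|\le\kappa_{\mathrm{mf}}\Delta^2$ and $\|\nabla m(y)-\nabla f(y)\|\le\kappa_{\mathrm{mg}}\Delta$, where $$\kappa_{\mathrm{mf}}=\frac{L_{\nabla f}}{2}(1+\sqrt n)\beta^2\|\hat M^{-1}\|_\infty+\frac{L_{\nabla f}}{2}+(1+\sqrt n)\|\hat M^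{-1}\|_\infty\epsilon_f,\qquad\kappa_{\mathrm{mg}}=2\kappa_{\mathrm{mf}}.$$
   Context: $\|A\|_\infty$ is the maximum absolute row sum; other norms Euclidean; $B(x,\Delta)=\{y:\|y-x\|\le\Delta\}$. *)

theory Defs
  imports "HOL-Probability.Probability"
begin

definition inf_norm_mat :: "real^'m^'m \<Rightarrow> real" where
  "inf_norm_mat A = Max (range (\<lambda>i. \<Sum>j\<in>UNIV. \<bar>A $ i $ j\<bar>))"

text \<open>Interpolation matrix: rows indexed by the p = n+1 sample points ('n option),
  column None is the constant 1, column Some k is the k-th entry of (y_i - x)/Delta.\<close>
definition interp_mat :: "('n::finite option \<Rightarrow> real^'n) \<Rightarrow> real^'n \<Rightarrow> real \<Rightarrow> real^('n option)^('n option)" where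
  "interp_mat y x \<Delta> = (\<chi> i j. case j of None \<Rightarrow> 1 | Some k \<Rightarrow> (y i - x) $ k / \<Delta>)"

definition sample_avg :: "(real^'n \<Rightarrow> 'w \<Rightarrow> real) \<Rightarrow> nat \<Rightarrow> ('n::finite option \<Rightarrow> real^'n)
    \<Rightarrow> ('n option \<times> nat \<Rightarrow> 'w) \<Rightarrow> real^('n option)" where
  "sample_avg F N y \<omega> = (\<chi> i. (\<Sum>j<N. F (y i) (\<omega> (i, j))) / real N)"

definition interp_sol :: "(real^'n \<Rightarrow> 'w \<Rightarrow> real) \<Rightarrow> nat \<Rightarrow> ('n::finite option \<Rightarrow> real^'n)
    \<Rightarrow> real^'n \<Rightarrow> real \<Rightarrow> ('n option \<times> nat \<Rightarrow> 'w) \<Rightarrow> real^('n option)" where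
  "interp_sol F N y x \<Delta> \<omega> = matrix_inv (interp_mat y x \<Delta>) *v sample_avg F N y \<omega>"

definition model_c :: "(real^'n \<Rightarrow> 'w \<Rightarrow> real) \<Rightarrow> nat \<Rightarrow> ('n::finite option \<Rightarrow> real^'n)
    \<Rightarrow> real^'n \<Rightarrow> real \<Rightarrow> ('n option \<times> nat \<Rightarrow> 'w) \<Rightarrow> real" where
  "model_c F N y x \<Delta> \<omega> = interp_sol F N y x \<Delta> \<omega> $ None"

definition model_g :: "(real^'n \<Rightarrow> 'w \<Rightarrow> real) \<Rightarrow> nat \<Rightarrow> ('n::finite option \<Rightarrow> real^'n)
    \<Rightarrow> real^'n \<Rightarrow> real \<Rightarrow> ('n option \<times> nat \<Rightarrow> 'w) \<Rightarrow> real^'n" where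
  "model_g F N y x \<Delta> \<omega> = (\<chi> k. interp_sol F N y x \<Delta> \<omega> $ Some k / \<Delta>)"

definition model :: "(real^'n \<Rightarrow> 'w \<Rightarrow> real) \<Rightarrow> nat \<Rightarrow> ('n::finite option \<Rightarrow> real^'n)
    \<Rightarrow> real^'n \<Rightarrow> real \<Rightarrow> ('n option \<times> nat \<Rightarrow> 'w) \<Rightarrow> real^'n \<Rightarrow> real" where
  "model F N y x \<Delta> \<omega> z = model_c F N y x \<Delta> \<omega> + model_g F N y x \<Delta> \<omega> \<bullet> (z - x)"

end

theory Submission
  imports Defs
begin


lemma taylor_lip:
  fixes f :: "'a::real_inner \<Rightarrow> real" and gradf :: "'a \<Rightarrow> 'a"
  assumes deriv: "\<And>z. (f has_derivative (\<lambda>h. gradf z \<bullet> h)) (at z)"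
    and lip: "L-lipschitz_on UNIV gradf"
  shows "\<bar>f y - f x - gradf x \<bullet> (y - x)\<bar> \<le> L / 2 * (norm (y - x))\<^sup>2"
proof -
  define d where "d = y - x"
  have L0: "0 \<le> L" using lipschitz_on_nonneg[OF lip] .
  have D: "((\<lambda>t. f (x + t *\<^sub>R d)) has_real_derivative (gradf (x + t *\<^sub>R d) \<bullet> d)) (at t)" for t
  proof -
    have "((\<lambda>t. x + t *\<^sub>R d) has_derivative (\<lambda>s. s *\<^sub>R d)) (at t)"
      by (auto intro!: derivative_eq_intros)
    from has_derivative_compose[OF this deriv]
    have "((\<lambda>t. f (x + t *\<^sub>R d)) has_derivative (\<lambda>s. gradf (x + t *\<^sub>R d) \<bullet> (s *\<^sub>R d))) (at t)" .
    then show ?thesis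
      by (simp add: has_field_derivative_def mult.commute[of _ "gradf (x + t *\<^sub>R d) \<bullet> d"])
  qed
  have lipd: "\<bar>(gradf (x + t *\<^sub>R d) - gradf x) \<bullet> d\<bar> \<le> L * t * (norm d)\<^sup>2" if "0 \<le> t" for t
  proof -
    have "\<bar>(gradf (x + t *\<^sub>R d) - gradf x) \<bullet> d\<bar> \<le> norm (gradf (x + t *\<^sub>R d) - gradf x) * norm d"
      by (rule Cauchy_Schwarz_ineq2)
    also have "norm (gradf (x + t *\<^sub>R d) - gradf x) \<le> L * norm (t *\<^sub>R d)"
      using lipschitz_onD[OF lip, of "x + t *\<^sub>R d" x] by (simp add: dist_norm)
    then have "norm (gradf (x + t *\<^sub>R d) - gradf x) * norm d \<le> L * norm (t *\<^sub>R d) * norm d"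
      by (simp add: mult_right_mono)
    also have "\<dots> = L * t * (norm d)\<^sup>2" using that by (simp add: power2_eq_square)
    finally show ?thesis .
  qed
  define h1 where "h1 t = f (x + t *\<^sub>R d) - t * (gradf x \<bullet> d) - L / 2 * t\<^sup>2 * (norm d)\<^sup>2" for t
  define h2 where "h2 t = f (x + t *\<^sub>R d) - t * (gradf x \<bullet> d) + L / 2 * t\<^sup>2 * (norm d)\<^sup>2" for t
  have "h1 1 \<le> h1 0"
  proof (rule DERIV_nonpos_imp_nonincreasing[of 0 1])
    fix t :: real assume t: "0 \<le> t" "t \<le> 1"
    have "(h1 has_real_derivative (gradf (x + t *\<^sub>R d) \<bullet> d - gradf x \<bullet> d - L * t * (norm d)\<^sup>2)) (at t)"
      unfolding h1_def by (auto intro!: derivative_eq_intros D simp: power2_eq_square)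
    moreover have "gradf (x + t *\<^sub>R d) \<bullet> d - gradf x \<bullet> d - L * t * (norm d)\<^sup>2 \<le> 0"
      using lipd[OF t(1)] by (simp add: inner_diff_left)
    ultimately show "\<exists>y. DERIV h1 t :> y \<and> y \<le> 0" by blast
  qed simp
  moreover have "h2 0 \<le> h2 1"
  proof (rule DERIV_nonneg_imp_nondecreasing[of 0 1])
    fix t :: real assume t: "0 \<le> t" "t \<le> 1"
    have "(h2 has_real_derivative (gradf (x + t *\<^sub>R d) \<bullet> d - gradf x \<bullet> d + L * t * (norm d)\<^sup>2)) (at t)"
      unfolding h2_def by (auto intro!: derivative_eq_intros D simp: power2_eq_square)
    moreover have "gradf (x + t *\<^sub>R d) \<bullet> d - gradf x \<bullet> d + L * t * (norm d)\<^sup>2 \<ge> 0"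
      using lipd[OF t(1)] by (simp add: inner_diff_left)
    ultimately show "\<exists>y. DERIV h2 t :> y \<and> y \<ge> 0" by blast
  qed simp
  ultimately have "f y - f x - gradf x \<bullet> d \<le> L / 2 * (norm d)\<^sup>2" "f x - f y + gradf x \<bullet> d \<le> L / 2 * (norm d)\<^sup>2"
    unfolding h1_def h2_def d_def by (simp_all add: algebra_simps)
  then show ?thesis unfolding d_def by linarith
qed


lemma matrix_inv_left':
  fixes A :: "real^'n^'m"
  assumes "invertible A" shows "matrix_inv A ** A = mat 1"
proof -
  have "\<exists>A'. A ** A' = mat 1 \<and> A' ** A = mat 1" using assms unfolding invertible_def by blast
  from someI_ex[OF this] show ?thesis unfolding matrix_inv_def by blast
qed

lemma sum_UNIV_option:
  fixes g :: "'a::finite option \<Rightarrow> 'b::comm_monoid_add"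
  shows "(\<Sum>i\<in>UNIV. g i) = g None + (\<Sum>k\<in>UNIV. g (Some k))"
  by (simp add: UNIV_option_conv sum.reindex)

lemma norm_le_sqrt_card:
  fixes w :: "real^'n"
  assumes "\<And>k. \<bar>w $ k\<bar> \<le> B"
  shows "norm w \<le> sqrt (real CARD('n)) * B"
proof -
  have B0: "0 \<le> B" using assms[of undefined] by linarith
  have "(\<Sum>k\<in>UNIV. (w $ k)\<^sup>2) \<le> (\<Sum>k\<in>(UNIV::'n set). B\<^sup>2)"
    by (intro sum_mono) (metis abs_ge_zero assms power2_abs power_mono)
  then have "sqrt (\<Sum>k\<in>UNIV. (w $ k)\<^sup>2) \<le> sqrt (real CARD('n) * B\<^sup>2)" by simp
  then show ?thesis using B0 by (simp add: norm_vec_def L2_set_def real_sqrt_mult)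
qed

lemma inf_norm_bound:
  fixes A :: "real^'m^'m" and v :: "real^'m"
  assumes "\<And>j. \<bar>v $ j\<bar> \<le> E"
  shows "\<bar>(A *v v) $ i\<bar> \<le> inf_norm_mat A * E"
proof -
  have "\<bar>(A *v v) $ i\<bar> \<le> (\<Sum>j\<in>UNIV. \<bar>A $ i $ j\<bar> * \<bar>v $ j\<bar>)"
    unfolding matrix_vector_mult_def by (simp add: sum_abs[THEN order_trans] abs_mult)
  also have "\<dots> \<le> (\<Sum>j\<in>UNIV. \<bar>A $ i $ j\<bar> * E)"
    by (intro sum_mono mult_left_mono assms) auto
  also have "\<dots> = (\<Sum>j\<in>UNIV. \<bar>A $ i $ j\<bar>) * E" by (simp add: sum_distrib_right)
  also have "\<dots> \<le> inf_norm_mat A * E"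
  proof (rule mult_right_mono)
    show "(\<Sum>j\<in>UNIV. \<bar>A $ i $ j\<bar>) \<le> inf_norm_mat A"
      unfolding inf_norm_mat_def by (rule Max_ge) auto
    show "0 \<le> E" using assms[of undefined] by linarith
  qed
  finally show ?thesis .
qed

lemma inf_norm_nonneg: "0 \<le> inf_norm_mat (A :: real^'m^'m)"
proof -
  have "0 \<le> (\<Sum>j\<in>UNIV. \<bar>A $ undefined $ j\<bar>)" by (simp add: sum_nonneg)
  also have "\<dots> \<le> inf_norm_mat A" unfolding inf_norm_mat_def by (rule Max_ge) auto
  finally show ?thesis .
qed


lemma abs3: "\<bar>a::real\<bar> \<le> p \<Longrightarrow> \<bar>b\<bar> \<le> q \<Longrightarrow> \<bar>c\<bar> \<le> r \<Longrightarrow> \<bar>a + b - c\<bar> \<le> p + q + r"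
  by linarith

lemma det_bound:
  fixes f :: "real^'n \<Rightarrow> real" and gradf :: "real^'n \<Rightarrow> real^'n"
    and F :: "real^'n \<Rightarrow> 'w \<Rightarrow> real"
    and L \<Delta> \<beta> \<epsilon>f :: real and x z :: "real^'n"
    and y :: "'n option \<Rightarrow> real^'n" and N :: nat
  assumes deriv: "\<And>z. (f has_derivative (\<lambda>h. gradf z \<bullet> h)) (at z)"
    and lip: "L-lipschitz_on UNIV gradf"
    and \<Delta>: "\<Delta> > 0"
    and ypts: "\<And>i. norm (y i - x) \<le> \<beta> * \<Delta>"
    and inv: "invertible (interp_mat y x \<Delta>)"
    and \<epsilon>f: "\<epsilon>f > 0"
    and err: "\<And>i. \<bar>sample_avg F N y \<omega> $ i - f (y i)\<bar> \<le> \<epsilon>f * \<Delta>\<^sup>2"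
    and z: "norm (z - x) \<le> \<Delta>"
  shows "(let \<kappa>mf = L / 2 * (1 + sqrt (real CARD('n))) * \<beta>\<^sup>2 * inf_norm_mat (matrix_inv (interp_mat y x \<Delta>))
                          + L / 2 + (1 + sqrt (real CARD('n))) * inf_norm_mat (matrix_inv (interp_mat y x \<Delta>)) * \<epsilon>f;
                   \<kappa>mg = 2 * \<kappa>mf
               in \<bar>model F N y x \<Delta> \<omega> z - f z\<bar> \<le> \<kappa>mf * \<Delta>\<^sup>2 \<and>
                  norm (model_g F N y x \<Delta> \<omega> - gradf z) \<le> \<kappa>mg * \<Delta>)"
proof -
  define M where "M = interp_mat y x \<Delta>"
  define Mi where "Mi = matrix_inv M"
  define nm where "nm = inf_norm_mat Mi"
  define s where "s = sample_avg F N y \<omega>"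
  define v :: "real^('n option)" where "v = (\<chi> i. case i of None \<Rightarrow> f x | Some k \<Rightarrow> \<Delta> * gradf x $ k)"
  define sq where "sq = sqrt (real CARD('n))"
  define K where "K = nm * (\<epsilon>f + L / 2 * \<beta>\<^sup>2)"
  have L0: "0 \<le> L" using lipschitz_on_nonneg[OF lip] .
  have nm0: "0 \<le> nm" unfolding nm_def by (rule inf_norm_nonneg)
  have sq0: "0 \<le> sq" unfolding sq_def by simp
  have K0: "0 \<le> K" unfolding K_def using nm0 L0 \<epsilon>f by simp
  have Mv: "(M *v v) $ i = f x + gradf x \<bullet> (y i - x)" for i
  proof -
    have "(M *v v) $ i = f x + (\<Sum>k\<in>UNIV. (y i - x) $ k / \<Delta> * (\<Delta> * gradf x $ k))"
      unfolding matrix_vector_mult_def M_def interp_mat_def v_def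
      by (simp add: sum_UNIV_option)
    also have "\<dots> = f x + gradf x \<bullet> (y i - x)"
      using \<Delta> by (simp add: inner_vec_def mult.commute)
    finally show ?thesis .
  qed
  have sol: "interp_sol F N y x \<Delta> \<omega> - v = Mi *v (s - M *v v)"
  proof -
    have "Mi *v (M *v v) = v"
      using matrix_inv_left'[OF inv] unfolding Mi_def M_def
      by (simp add: matrix_vector_mul_assoc)
    then show ?thesis unfolding interp_sol_def Mi_def[symmetric] M_def[symmetric] s_def
      by (simp add: matrix_vector_mult_diff_distrib)
  qed
  have ebound: "\<bar>(s - M *v v) $ i\<bar> \<le> (\<epsilon>f + L / 2 * \<beta>\<^sup>2) * \<Delta>\<^sup>2" for i
  proof -
    have t: "\<bar>f (y i) - f x - gradf x \<bullet> (y i - x)\<bar> \<le> L / 2 * (norm (y i - x))\<^sup>2"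
      by (rule taylor_lip[OF deriv lip])
    have "(norm (y i - x))\<^sup>2 \<le> (\<beta> * \<Delta>)\<^sup>2"
      using ypts[of i] by (simp add: power_mono)
    then have "L / 2 * (norm (y i - x))\<^sup>2 \<le> L / 2 * (\<beta> * \<Delta>)\<^sup>2"
      using L0 by (simp add: mult_left_mono)
    moreover have "\<bar>s $ i - f (y i)\<bar> \<le> \<epsilon>f * \<Delta>\<^sup>2" using err unfolding s_def .
    moreover have "(s - M *v v) $ i = (s $ i - f (y i)) + (f (y i) - f x - gradf x \<bullet> (y i - x))"
      by (simp add: Mv)
    moreover have "\<bar>(s $ i - f (y i)) + (f (y i) - f x - gradf x \<bullet> (y i - x))\<bar>
       \<le> \<bar>s $ i - f (y i)\<bar> + \<bar>f (y i) - f x - gradf x \<bullet> (y i - x)\<bar>" by (rule abs_triangle_ineq)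
    moreover have "(\<epsilon>f + L / 2 * \<beta>\<^sup>2) * \<Delta>\<^sup>2 = \<epsilon>f * \<Delta>\<^sup>2 + L / 2 * (\<beta> * \<Delta>)\<^sup>2"
      by (simp add: algebra_simps power_mult_distrib)
    ultimately show ?thesis using t by linarith
  qed
  have compb: "\<bar>(interp_sol F N y x \<Delta> \<omega> - v) $ i\<bar> \<le> K * \<Delta>\<^sup>2" for i
    unfolding sol K_def nm_def mult.assoc
    by (rule inf_norm_bound) (rule ebound)
  have cb: "\<bar>model_c F N y x \<Delta> \<omega> - f x\<bar> \<le> K * \<Delta>\<^sup>2"
    using compb[of None] by (simp add: model_c_def v_def)
  have gcomp: "\<bar>(model_g F N y x \<Delta> \<omega> - gradf x) $ k\<bar> \<le> K * \<Delta>" for k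
  proof -
    have "(model_g F N y x \<Delta> \<omega> - gradf x) $ k = (interp_sol F N y x \<Delta> \<omega> - v) $ Some k / \<Delta>"
      using \<Delta> by (simp add: model_g_def v_def field_simps)
    also have "\<bar>\<dots>\<bar> \<le> K * \<Delta>\<^sup>2 / \<Delta>"
      using compb[of "Some k"] \<Delta> by (simp add: abs_div divide_right_mono)
    also have "\<dots> = K * \<Delta>" using \<Delta> by (simp add: power2_eq_square)
    finally show ?thesis .
  qed
  have gb: "norm (model_g F N y x \<Delta> \<omega> - gradf x) \<le> sq * (K * \<Delta>)"
    unfolding sq_def by (rule norm_le_sqrt_card) (rule gcomp)
  have tz: "\<bar>f z - f x - gradf x \<bullet> (z - x)\<bar> \<le> L / 2 * \<Delta>\<^sup>2"
  proof -
    have "(norm (z - x))\<^sup>2 \<le> \<Delta>\<^sup>2" using z by (simp add: power_mono)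
    then have "L / 2 * (norm (z - x))\<^sup>2 \<le> L / 2 * \<Delta>\<^sup>2" using L0 by (simp add: mult_left_mono)
    then show ?thesis using taylor_lip[OF deriv lip, of z x] by linarith
  qed
  have ip: "\<bar>(model_g F N y x \<Delta> \<omega> - gradf x) \<bullet> (z - x)\<bar> \<le> sq * K * \<Delta>\<^sup>2"
  proof -
    have "\<bar>(model_g F N y x \<Delta> \<omega> - gradf x) \<bullet> (z - x)\<bar> \<le> norm (model_g F N y x \<Delta> \<omega> - gradf x) * norm (z - x)"
      by (rule Cauchy_Schwarz_ineq2)
    also have "\<dots> \<le> (sq * (K * \<Delta>)) * \<Delta>"
      using gb z by (intro mult_mono) (auto intro!: mult_nonneg_nonneg sq0 K0 less_imp_le[OF \<Delta>])
    finally show ?thesis by (simp add: power2_eq_square mult.assoc)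
  qed
  have kmf: "L / 2 * (1 + sq) * \<beta>\<^sup>2 * nm + L / 2 + (1 + sq) * nm * \<epsilon>f = (1 + sq) * K + L / 2"
    unfolding K_def by (simp add: algebra_simps)
  have part1: "\<bar>model F N y x \<Delta> \<omega> z - f z\<bar> \<le> ((1 + sq) * K + L / 2) * \<Delta>\<^sup>2"
  proof -
    have "model F N y x \<Delta> \<omega> z - f z = (model_c F N y x \<Delta> \<omega> - f x)
        + (model_g F N y x \<Delta> \<omega> - gradf x) \<bullet> (z - x) - (f z - f x - gradf x \<bullet> (z - x))"
      unfolding model_def by (simp add: inner_diff_left)
    then have "\<bar>model F N y x \<Delta> \<omega> z - f z\<bar> \<le> K * \<Delta>\<^sup>2 + sq * K * \<Delta>\<^sup>2 + L / 2 * \<Delta>\<^sup>2"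
      using abs3[OF cb ip tz] by simp
    then show ?thesis by (simp add: algebra_simps)
  qed
  have part2: "norm (model_g F N y x \<Delta> \<omega> - gradf z) \<le> 2 * ((1 + sq) * K + L / 2) * \<Delta>"
  proof -
    have "norm (gradf x - gradf z) \<le> L * \<Delta>"
      using lipschitz_onD[OF lip, of x z] z L0 by (simp add: dist_norm norm_minus_commute mult_left_mono order_trans)
    moreover have "norm (model_g F N y x \<Delta> \<omega> - gradf z) \<le> norm (model_g F N y x \<Delta> \<omega> - gradf x) + norm (gradf x - gradf z)"
      by (metis diff_add_cancel add_diff_eq norm_triangle_ineq)
    moreover have "sq * (K * \<Delta>) \<le> 2 * (1 + sq) * K * \<Delta>"
      using sq0 K0 \<Delta> by (simp add: mult_right_mono algebra_simps mult_nonneg_nonneg)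
    ultimately show ?thesis using gb by (simp add: algebra_simps)
  qed
  show ?thesis
    unfolding Let_def M_def[symmetric] Mi_def[symmetric] nm_def[symmetric] sq_def[symmetric] kmf
    using part1 part2 by simp
qed


lemma coord_integral:
  fixes h :: "'w \<Rightarrow> real"
  assumes P: "prob_space P" and a: "a \<in> I" and hm: "h \<in> borel_measurable P"
  shows "integrable (PiM I (\<lambda>_. P)) (\<lambda>\<omega>. h (\<omega> a)) \<longleftrightarrow> integrable P h"
    and "(\<integral>\<omega>. h (\<omega> a) \<partial>PiM I (\<lambda>_. P)) = integral\<^sup>L P h"
proof -
  have d: "distr (PiM I (\<lambda>_. P)) P (\<lambda>\<omega>. \<omega> a) = P"
    by (rule distr_PiM_component[where M="\<lambda>_. P", OF P a])
  have m: "(\<lambda>\<omega>. \<omega> a) \<in> measurable (PiM I (\<lambda>_. P)) P"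
    using a by (rule measurable_component_singleton)
  show "integrable (PiM I (\<lambda>_. P)) (\<lambda>\<omega>. h (\<omega> a)) \<longleftrightarrow> integrable P h"
    using integrable_distr_eq[OF m hm] d by simp
  show "(\<integral>\<omega>. h (\<omega> a) \<partial>PiM I (\<lambda>_. P)) = integral\<^sup>L P h"
    using integral_distr[OF m hm] d by simp
qed

lemma pair_prod:
  assumes "finite I" "a \<in> I" "b \<in> I" "a \<noteq> b"
  shows "(\<Prod>l\<in>I. (if l = a \<or> l = b then h else (\<lambda>_. 1::real)) (\<omega> l)) = h (\<omega> a) * h (\<omega> b)"
proof -
  have "(\<Prod>l\<in>I. (if l = a \<or> l = b then h else (\<lambda>_. 1::real)) (\<omega> l))
      = (\<Prod>l\<in>I. if l \<in> {a, b} then h (\<omega> l) else 1)"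
    by (intro prod.cong) auto
  also have "\<dots> = (\<Prod>l\<in>{a,b}. h (\<omega> l))"
  proof -
    have S: "I \<inter> {l. l \<in> {a, b}} = {a, b}" using assms by auto
    show ?thesis unfolding prod.If_cases[OF assms(1)] S by simp
  qed
  also have "\<dots> = h (\<omega> a) * h (\<omega> b)" using assms by simp
  finally show ?thesis .
qed

lemma pair_integral:
  fixes h :: "'w \<Rightarrow> real"
  assumes P: "prob_space P" and fin: "finite I" and ab: "a \<in> I" "b \<in> I" "a \<noteq> b"
    and hi: "integrable P h"
  shows "integrable (PiM I (\<lambda>_. P)) (\<lambda>\<omega>. h (\<omega> a) * h (\<omega> b))"
    and "(\<integral>\<omega>. h (\<omega> a) * h (\<omega> b) \<partial>PiM I (\<lambda>_. P)) = integral\<^sup>L P h * integral\<^sup>L P h"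
proof -
  interpret P: prob_space P by (rule P)
  interpret PS: product_sigma_finite "\<lambda>_. P" by unfold_locales
  define g where "g l = (if l = a \<or> l = b then h else (\<lambda>_. 1::real))" for l
  have gi: "integrable P (g l)" for l
    using hi by (auto simp: g_def)
  have eq: "(\<lambda>\<omega>. h (\<omega> a) * h (\<omega> b)) = (\<lambda>\<omega>. \<Prod>l\<in>I. g l (\<omega> l))"
    unfolding g_def by (intro ext) (simp only: pair_prod[OF fin ab])
  show "integrable (PiM I (\<lambda>_. P)) (\<lambda>\<omega>. h (\<omega> a) * h (\<omega> b))"
    unfolding eq by (rule PS.product_integrable_prod[OF fin gi])
  have "(\<integral>\<omega>. (\<Prod>l\<in>I. g l (\<omega> l)) \<partial>PiM I (\<lambda>_. P)) = (\<Prod>l\<in>I. integral\<^sup>L P (g l))"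
    by (rule PS.product_integral_prod[OF fin gi])
  also have "\<dots> = (\<Prod>l\<in>I. if l \<in> {a, b} then integral\<^sup>L P h else 1)"
    by (intro prod.cong) (auto simp: g_def P.prob_space)
  also have "\<dots> = (\<Prod>l\<in>{a,b}. integral\<^sup>L P h)"
  proof -
    have S: "I \<inter> {l. l \<in> {a, b}} = {a, b}" using ab by auto
    show ?thesis unfolding prod.If_cases[OF fin] S by simp
  qed
  also have "\<dots> = integral\<^sup>L P h * integral\<^sup>L P h" using ab by simp
  finally show "(\<integral>\<omega>. h (\<omega> a) * h (\<omega> b) \<partial>PiM I (\<lambda>_. P)) = integral\<^sup>L P h * integral\<^sup>L P h"
    unfolding eq .
qed

lemma sum_sq_integral:
  fixes h :: "'w \<Rightarrow> real" and c :: "nat \<Rightarrow> 'i"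
  assumes P: "prob_space P" and fin: "finite I" and cI: "\<And>j. j < N \<Longrightarrow> c j \<in> I"
    and cinj: "inj_on c {..<N}"
    and hi: "integrable P h" and h2i: "integrable P (\<lambda>w. (h w)\<^sup>2)"
    and h0: "integral\<^sup>L P h = 0" and h2: "integral\<^sup>L P (\<lambda>w. (h w)\<^sup>2) \<le> s"
  shows "integrable (PiM I (\<lambda>_. P)) (\<lambda>\<omega>. (\<Sum>j<N. h (\<omega> (c j)))\<^sup>2)"
    and "(\<integral>\<omega>. (\<Sum>j<N. h (\<omega> (c j)))\<^sup>2 \<partial>PiM I (\<lambda>_. P)) \<le> real N * s"
proof -
  have hm: "h \<in> borel_measurable P" using hi by auto
  have hm2: "(\<lambda>w. h w * h w) \<in> borel_measurable P" using hm by measurable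
  have h2i': "integrable P (\<lambda>w. h w * h w)" using h2i by (simp add: power2_eq_square)
  have sq: "(\<Sum>j<N. h (\<omega> (c j)))\<^sup>2 = (\<Sum>j<N. \<Sum>k<N. h (\<omega> (c j)) * h (\<omega> (c k)))" for \<omega>
    by (simp add: power2_eq_square sum_product)
  have ijk: "integrable (PiM I (\<lambda>_. P)) (\<lambda>\<omega>. h (\<omega> (c j)) * h (\<omega> (c k)))
     \<and> (\<integral>\<omega>. h (\<omega> (c j)) * h (\<omega> (c k)) \<partial>PiM I (\<lambda>_. P)) = (if j = k then integral\<^sup>L P (\<lambda>w. (h w)\<^sup>2) else 0)"
    if jk: "j < N" "k < N" for j k
  proof (cases "j = k")
    case True
    then show ?thesis
      using coord_integral[OF P cI[OF jk(1)] hm2] h2i' by (simp add: power2_eq_square)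
  next
    case False
    then have "c j \<noteq> c k" using cinj jk by (auto dest: inj_onD)
    then show ?thesis using pair_integral[OF P fin cI[OF jk(1)] cI[OF jk(2)] _ hi] h0 False by simp
  qed
  show "integrable (PiM I (\<lambda>_. P)) (\<lambda>\<omega>. (\<Sum>j<N. h (\<omega> (c j)))\<^sup>2)"
    unfolding sq using ijk by (intro Bochner_Integration.integrable_sum) auto
  have "(\<integral>\<omega>. (\<Sum>j<N. h (\<omega> (c j)))\<^sup>2 \<partial>PiM I (\<lambda>_. P))
      = (\<Sum>j<N. \<Sum>k<N. (\<integral>\<omega>. h (\<omega> (c j)) * h (\<omega> (c k)) \<partial>PiM I (\<lambda>_. P)))"
    unfolding sq
  proof -
    have "(\<integral>\<omega>. (\<Sum>j<N. \<Sum>k<N. h (\<omega> (c j)) * h (\<omega> (c k))) \<partial>PiM I (\<lambda>_. P))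
       = (\<Sum>j<N. (\<integral>\<omega>. (\<Sum>k<N. h (\<omega> (c j)) * h (\<omega> (c k))) \<partial>PiM I (\<lambda>_. P)))"
      by (intro Bochner_Integration.integral_sum Bochner_Integration.integrable_sum) (use ijk in auto)
    also have "\<dots> = (\<Sum>j<N. \<Sum>k<N. (\<integral>\<omega>. h (\<omega> (c j)) * h (\<omega> (c k)) \<partial>PiM I (\<lambda>_. P)))"
      by (intro sum.cong refl Bochner_Integration.integral_sum) (use ijk in auto)
    finally show "(\<integral>\<omega>. (\<Sum>j<N. \<Sum>k<N. h (\<omega> (c j)) * h (\<omega> (c k))) \<partial>PiM I (\<lambda>_. P))
       = (\<Sum>j<N. \<Sum>k<N. (\<integral>\<omega>. h (\<omega> (c j)) * h (\<omega> (c k)) \<partial>PiM I (\<lambda>_. P)))" .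
  qed
  also have "\<dots> = (\<Sum>j<N. \<Sum>k<N. (if j = k then integral\<^sup>L P (\<lambda>w. (h w)\<^sup>2) else 0))"
    using ijk by (intro sum.cong) auto
  also have "\<dots> = (\<Sum>j<N. integral\<^sup>L P (\<lambda>w. (h w)\<^sup>2))"
    by (simp add: sum.delta)
  also have "\<dots> \<le> real N * s" using h2 by (simp add: mult_left_mono)
  finally show "(\<integral>\<omega>. (\<Sum>j<N. h (\<omega> (c j)))\<^sup>2 \<partial>PiM I (\<lambda>_. P)) \<le> real N * s" .
qed


lemma bad_prob:
  fixes F :: "real^'n \<Rightarrow> 'w \<Rightarrow> real" and y :: "'n::finite option \<Rightarrow> real^'n"
  assumes P: "prob_space P"
    and integ: "\<And>z. integrable P (F z)"
    and integ2: "\<And>z. integrable P (\<lambda>\<omega>. (F z \<omega>)\<^sup>2)"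
    and mean: "\<And>z. f z = prob_space.expectation P (F z)"
    and var: "\<And>z. prob_space.variance P (F z) \<le> \<sigma>\<^sup>2"
    and N_pos: "N > 0" and a: "a > 0"
  shows "measure (PiM (UNIV \<times> {..<N}) (\<lambda>_. P))
           {\<omega> \<in> space (PiM (UNIV \<times> {..<N}) (\<lambda>_. P)). \<bar>sample_avg F N y \<omega> $ i - f (y i)\<bar> \<ge> a}
         \<le> \<sigma>\<^sup>2 / (real N * a\<^sup>2)"
proof -
  interpret P: prob_space P by (rule P)
  define I where "I = (UNIV :: 'n option set) \<times> {..<N}"
  define Q where "Q = PiM I (\<lambda>_. P)"
  interpret Q: prob_space Q unfolding Q_def by (rule prob_space_PiM) (rule P)
  define h where "h w = F (y i) w - f (y i)" for w
  have hi: "integrable P h" unfolding h_def using integ by simp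
  have hm: "h \<in> borel_measurable P" using hi by auto
  have h2e: "(\<lambda>w. (h w)\<^sup>2) = (\<lambda>w. (F (y i) w)\<^sup>2 - 2 * f (y i) * F (y i) w + (f (y i))\<^sup>2)"
    unfolding h_def by (auto simp: power2_eq_square algebra_simps)
  have h2i: "integrable P (\<lambda>w. (h w)\<^sup>2)" unfolding h2e using integ integ2 by auto
  have h0: "integral\<^sup>L P h = 0" unfolding h_def using integ mean by (simp add: P.prob_space)
  have h2: "integral\<^sup>L P (\<lambda>w. (h w)\<^sup>2) \<le> \<sigma>\<^sup>2"
    using var[of "y i"] unfolding h_def mean[of "y i"] by simp
  have fin: "finite I" unfolding I_def by simp
  have cI: "\<And>j. j < N \<Longrightarrow> (i, j) \<in> I" unfolding I_def by simp
  have cinj: "inj_on (\<lambda>j. (i, j)) {..<N}" by (auto simp: inj_on_def)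
  note S = sum_sq_integral[OF P fin cI cinj hi h2i h0 h2]
  define g where "g \<omega> = (\<Sum>j<N. h (\<omega> (i, j))) / real N" for \<omega>
  have geq: "sample_avg F N y \<omega> $ i - f (y i) = g \<omega>" for \<omega>
    using N_pos unfolding g_def h_def sample_avg_def
    by (simp add: sum_subtractf field_simps)
  have gm: "g \<in> borel_measurable Q"
  proof -
    have "(\<lambda>\<omega>. h (\<omega> (i, j))) \<in> borel_measurable Q" if "j \<in> {..<N}" for j
      using measurable_comp[OF measurable_component_singleton[OF cI] hm] that
      unfolding Q_def by (simp add: o_def)
    then show ?thesis unfolding g_def by (intro borel_measurable_divide borel_measurable_sum) auto
  qed
  have g2: "(\<lambda>\<omega>. (g \<omega>)\<^sup>2) = (\<lambda>\<omega>. (\<Sum>j<N. h (\<omega> (i, j)))\<^sup>2 / (real N)\<^sup>2)"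
    unfolding g_def by (simp add: power_divide)
  have g2i: "integrable Q (\<lambda>\<omega>. (g \<omega>)\<^sup>2)"
    unfolding g2 Q_def using S(1) by simp
  have "measure Q {\<omega> \<in> space Q. \<bar>g \<omega>\<bar> \<ge> a} \<le> integral\<^sup>L Q (\<lambda>\<omega>. (g \<omega>) ^ 2) / a\<^sup>2"
    by (rule Q.second_moment_method[OF gm g2i a])
  also have "integral\<^sup>L Q (\<lambda>\<omega>. (g \<omega>) ^ 2) \<le> \<sigma>\<^sup>2 / real N"
  proof -
    have "integral\<^sup>L Q (\<lambda>\<omega>. (g \<omega>) ^ 2) = (\<integral>\<omega>. (\<Sum>j<N. h (\<omega> (i, j)))\<^sup>2 \<partial>Q) / (real N)\<^sup>2"
      unfolding g2 by simp
    also have "\<dots> \<le> (real N * \<sigma>\<^sup>2) / (real N)\<^sup>2"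
      using S(2) unfolding Q_def by (intro divide_right_mono) auto
    also have "\<dots> = \<sigma>\<^sup>2 / real N" using N_pos by (simp add: power2_eq_square)
    finally show ?thesis .
  qed
  then have "integral\<^sup>L Q (\<lambda>\<omega>. (g \<omega>) ^ 2) / a\<^sup>2 \<le> \<sigma>\<^sup>2 / real N / a\<^sup>2"
    by (intro divide_right_mono) auto
  finally show ?thesis unfolding Q_def I_def geq by simp
qed


lemma coord_indep:
  assumes P: "prob_space P" and I: "I \<noteq> {}"
  shows "prob_space.indep_vars (PiM I (\<lambda>_. P)) (\<lambda>_. P) (\<lambda>l \<omega>. \<omega> l) I"
proof -
  define Q where "Q = PiM I (\<lambda>_. P)"
  interpret Q: prob_space Q unfolding Q_def by (rule prob_space_PiM) (rule P)
  have rv: "l \<in> I \<Longrightarrow> (\<lambda>\<omega>. \<omega> l) \<in> measurable Q P" for l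
    by (simp add: Q_def measurable_component_singleton)
  have "distr Q (PiM I (\<lambda>_. P)) (\<lambda>x. \<lambda>l\<in>I. x l) = distr Q Q (\<lambda>x. x)"
    by (rule distr_cong) (auto simp: Q_def space_PiM PiE_def extensional_restrict)
  also have "\<dots> = Q" by (rule distr_id)
  also have "\<dots> = PiM I (\<lambda>l. distr Q P (\<lambda>\<omega>. \<omega> l))"
    unfolding Q_def by (rule PiM_cong) (auto simp: distr_PiM_component[OF P])
  finally have "distr Q (PiM I (\<lambda>_. P)) (\<lambda>x. \<lambda>l\<in>I. x l) = PiM I (\<lambda>l. distr Q P (\<lambda>\<omega>. \<omega> l))" .
  then show ?thesis
    using Q.indep_vars_iff_distr_eq_PiM'[OF I rv] unfolding Q_def by simp
qed


lemma good_indep: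
  fixes F :: "real^'n \<Rightarrow> 'w \<Rightarrow> real" and y :: "'n::finite option \<Rightarrow> real^'n"
    and f :: "real^'n \<Rightarrow> real" and a :: real
  assumes P: "prob_space P"
    and integ: "\<And>z. integrable P (F z)"
    and N_pos: "N > 0"
  defines "Q \<equiv> PiM ((UNIV :: 'n option set) \<times> {..<N}) (\<lambda>_. P)"
  defines "G \<equiv> (\<lambda>i. {\<omega> \<in> space Q. \<bar>sample_avg F N y \<omega> $ i - f (y i)\<bar> < a})"
  shows "\<And>i. G i \<in> sets Q" and "measure Q (\<Inter>i. G i) = (\<Prod>i\<in>UNIV. measure Q (G i))"
proof -
  define I where "I = (UNIV :: 'n option set) \<times> {..<N}"
  interpret Q: prob_space Q unfolding Q_def by (rule prob_space_PiM) (rule P)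
  have I: "I \<noteq> {}" using N_pos unfolding I_def by auto
  have ind: "Q.indep_vars (\<lambda>_. P) (\<lambda>l \<omega>. \<omega> l) I"
    using coord_indep[OF P I] unfolding Q_def I_def by simp
  define K where "K i = {i} \<times> {..<N}" for i :: "'n option"
  have ind2: "Q.indep_vars (\<lambda>i. PiM (K i) (\<lambda>_. P)) (\<lambda>i \<omega>. restrict (\<lambda>l. \<omega> l) (K i)) UNIV"
    by (rule Q.indep_vars_restrict[OF ind]) (auto simp: K_def I_def disjoint_family_on_def)
  define B where "B i = {v \<in> space (PiM (K i) (\<lambda>_. P)).
      \<bar>(\<Sum>j<N. F (y i) (v (i, j))) / real N - f (y i)\<bar> < a}" for i
  have Bs: "B i \<in> sets (PiM (K i) (\<lambda>_. P))" for i
  proof -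
    have Fm: "F (y i) \<in> borel_measurable P" using integ by auto
    have cm: "(\<lambda>v. F (y i) (v (i, j))) \<in> borel_measurable (PiM (K i) (\<lambda>_. P))" if "j \<in> {..<N}" for j
      using measurable_comp[OF measurable_component_singleton[of "(i,j)" "K i" "\<lambda>_. P"] Fm] that
      by (simp add: K_def o_def)
    have gm: "(\<lambda>v. \<bar>(\<Sum>j<N. F (y i) (v (i, j))) / real N - f (y i)\<bar>) \<in> borel_measurable (PiM (K i) (\<lambda>_. P))"
      using cm by (intro borel_measurable_abs borel_measurable_diff borel_measurable_divide borel_measurable_sum) auto
    show ?thesis unfolding B_def using gm by measurable
  qed
  have pre: "(\<lambda>\<omega>. restrict (\<lambda>l. \<omega> l) (K i)) -` B i \<inter> space Q = G i" for i
  proof -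
    have rv: "(\<lambda>\<omega>. restrict (\<lambda>l. \<omega> l) (K i)) \<in> measurable Q (PiM (K i) (\<lambda>_. P))"
      using ind2 unfolding Q.indep_vars_def by auto
    have "restrict (\<lambda>l. \<omega> l) (K i) \<in> space (PiM (K i) (\<lambda>_. P))" if "\<omega> \<in> space Q" for \<omega>
      using measurable_space[OF rv that] .
    moreover have "(\<Sum>j<N. F (y i) (restrict (\<lambda>l. \<omega> l) (K i) (i, j))) = (\<Sum>j<N. F (y i) (\<omega> (i, j)))" for \<omega>
      by (intro sum.cong) (auto simp: K_def)
    ultimately show ?thesis unfolding B_def G_def sample_avg_def by auto
  qed
  show Gs: "G i \<in> sets Q" for i
  proof -
    have rv: "(\<lambda>\<omega>. restrict (\<lambda>l. \<omega> l) (K i)) \<in> measurable Q (PiM (K i) (\<lambda>_. P))"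
      using ind2 unfolding Q.indep_vars_def by auto
    show ?thesis using measurable_sets[OF rv Bs] unfolding pre .
  qed
  have "Q.prob (\<Inter>i\<in>UNIV. (\<lambda>\<omega>. restrict (\<lambda>l. \<omega> l) (K i)) -` B i \<inter> space Q)
      = (\<Prod>i\<in>UNIV. Q.prob ((\<lambda>\<omega>. restrict (\<lambda>l. \<omega> l) (K i)) -` B i \<inter> space Q))"
    by (rule Q.indep_varsD[OF ind2]) (auto simp: Bs)
  then show "measure Q (\<Inter>i. G i) = (\<Prod>i\<in>UNIV. measure Q (G i))"
    unfolding pre .
qed


theorem theorem8p11:
  fixes f :: "real^'n \<Rightarrow> real" and gradf :: "real^'n \<Rightarrow> real^'n"
    and F :: "real^'n \<Rightarrow> 'w \<Rightarrow> real" and P :: "'w measure"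
    and L \<sigma> \<Delta> \<beta> \<epsilon>f \<alpha>m :: real and x :: "real^'n"
    and y :: "'n option \<Rightarrow> real^'n" and N :: nat
  assumes P: "prob_space P"
    and bdd_below: "\<exists>b. \<forall>z. b \<le> f z"
    and deriv: "\<And>z. (f has_derivative (\<lambda>h. gradf z \<bullet> h)) (at z)"
    and lip: "L-lipschitz_on UNIV gradf"
    and integ: "\<And>z. integrable P (F z)"
    and integ2: "\<And>z. integrable P (\<lambda>\<omega>. (F z \<omega>)\<^sup>2)"
    and mean: "\<And>z. f z = prob_space.expectation P (F z)"
    and var: "\<And>z. prob_space.variance P (F z) \<le> \<sigma>\<^sup>2"
    and \<Delta>: "\<Delta> > 0" and \<beta>: "\<beta> > 0"
    and ypts: "\<And>i. norm (y i - x) \<le> \<beta> * \<Delta>"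
    and inv: "invertible (interp_mat y x \<Delta>)"
    and \<epsilon>f: "\<epsilon>f > 0" and \<alpha>m: "0 < \<alpha>m" "\<alpha>m < 1"
    and N_pos: "N > 0"
    and N_bound: "real N \<ge> \<sigma>\<^sup>2 / (\<epsilon>f\<^sup>2 * (1 - \<alpha>m powr (1 / real (CARD('n) + 1))) * \<Delta> ^ 4)"
  shows "\<exists>A \<in> sets (PiM (UNIV \<times> {..<N}) (\<lambda>_. P)).
           measure (PiM (UNIV \<times> {..<N}) (\<lambda>_. P)) A \<ge> \<alpha>m \<and>
           (\<forall>\<omega>\<in>A. \<forall>z. norm (z - x) \<le> \<Delta> \<longrightarrow>
              (let \<kappa>mf = L / 2 * (1 + sqrt (real CARD('n))) * \<beta>\<^sup>2 * inf_norm_mat (matrix_inv (interp_mat y x \<Delta>))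
                          + L / 2 + (1 + sqrt (real CARD('n))) * inf_norm_mat (matrix_inv (interp_mat y x \<Delta>)) * \<epsilon>f;
                   \<kappa>mg = 2 * \<kappa>mf
               in \<bar>model F N y x \<Delta> \<omega> z - f z\<bar> \<le> \<kappa>mf * \<Delta>\<^sup>2 \<and>
                  norm (model_g F N y x \<Delta> \<omega> - gradf z) \<le> \<kappa>mg * \<Delta>))"
proof -
  interpret P: prob_space P by (rule P)
  define Q where "Q = PiM ((UNIV :: 'n option set) \<times> {..<N}) (\<lambda>_. P)"
  interpret Q: prob_space Q unfolding Q_def by (rule prob_space_PiM) (rule P)
  define a where "a = \<epsilon>f * \<Delta>\<^sup>2"
  have a: "a > 0" unfolding a_def using \<epsilon>f \<Delta> by simp
  define G where "G = (\<lambda>i. {\<omega> \<in> space Q. \<bar>sample_avg F N y \<omega> $ i - f (y i)\<bar> < a})"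
  note GI = good_indep[where y=y and f=f and a=a and F=F, OF P integ N_pos, folded Q_def, folded G_def]
  define p where "p = CARD('n) + 1"
  define r where "r = \<alpha>m powr (1 / real p)"
  have r0: "0 < r" unfolding r_def using \<alpha>m by simp
  have rp: "r ^ p = \<alpha>m"
  proof -
    have "r ^ p = r powr real p" using r0 by (simp add: powr_realpow)
    also have "\<dots> = \<alpha>m powr (1 / real p * real p)" unfolding r_def using \<alpha>m by (simp add: powr_powr)
    also have "\<dots> = \<alpha>m" unfolding p_def using \<alpha>m by simp
    finally show ?thesis .
  qed
  have r1: "r < 1"
  proof (rule ccontr)
    assume "\<not> r < 1"
    then have "1 \<le> r ^ p" by simp
    then show False using rp \<alpha>m by simp
  qed
  have Nb: "\<sigma>\<^sup>2 / (real N * a\<^sup>2) \<le> 1 - r"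
  proof -
    have D: "0 < \<epsilon>f\<^sup>2 * (1 - r) * \<Delta> ^ 4" using \<epsilon>f \<Delta> r1 by simp
    have "\<sigma>\<^sup>2 \<le> real N * (\<epsilon>f\<^sup>2 * (1 - r) * \<Delta> ^ 4)"
      using N_bound D unfolding r_def p_def by (simp add: pos_divide_le_eq)
    also have "\<dots> = (1 - r) * (real N * a\<^sup>2)" unfolding a_def by (simp add: power_mult_distrib algebra_simps)
    finally show ?thesis using N_pos a by (simp add: pos_divide_le_eq)
  qed
  have Gr: "r \<le> measure Q (G i)" for i
  proof -
    have "space Q - G i = {\<omega> \<in> space Q. \<bar>sample_avg F N y \<omega> $ i - f (y i)\<bar> \<ge> a}"
      unfolding G_def by auto
    moreover have "measure Q {\<omega> \<in> space Q. \<bar>sample_avg F N y \<omega> $ i - f (y i)\<bar> \<ge> a} \<le> \<sigma>\<^sup>2 / (real N * a\<^sup>2)"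
      using bad_prob[where y=y and i=i and F=F and f=f, OF P integ integ2 mean var N_pos a] unfolding Q_def .
    moreover have "measure Q (space Q - G i) = 1 - measure Q (G i)" by (rule Q.prob_compl) (use GI(1) in \<open>auto simp: G_def\<close>)
    ultimately have "1 - measure Q (G i) \<le> \<sigma>\<^sup>2 / (real N * a\<^sup>2)" by simp
    then show ?thesis using Nb by simp
  qed
  have "\<alpha>m = (\<Prod>i\<in>(UNIV :: 'n option set). r)" using rp unfolding p_def by simp
  also have "\<dots> \<le> (\<Prod>i\<in>UNIV. measure Q (G i))"
    by (intro prod_mono) (use r0 Gr in auto)
  also have "\<dots> = measure Q (\<Inter>i. G i)" using GI(2) by (simp add: G_def)
  finally have meas: "\<alpha>m \<le> measure Q (\<Inter>i. G i)" .
  have As: "(\<Inter>i. G i) \<in> sets Q"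
    using GI(1) by (intro sets.finite_INT) (auto simp: G_def)
  show ?thesis
  proof (intro bexI[of _ "\<Inter>i. G i"] conjI ballI allI impI)
    show "(\<Inter>i. G i) \<in> sets (PiM (UNIV \<times> {..<N}) (\<lambda>_. P))" using As unfolding Q_def .
    show "\<alpha>m \<le> measure (PiM (UNIV \<times> {..<N}) (\<lambda>_. P)) (\<Inter>i. G i)" using meas unfolding Q_def .
  next
    fix \<omega> z assume \<omega>: "\<omega> \<in> (\<Inter>i. G i)" and z: "norm (z - x) \<le> \<Delta>"
    have err: "\<bar>sample_avg F N y \<omega> $ i - f (y i)\<bar> \<le> \<epsilon>f * \<Delta>\<^sup>2" for i
      using \<omega> unfolding G_def a_def by (auto intro: less_imp_le)
    show "let \<kappa>mf = L / 2 * (1 + sqrt (real CARD('n))) * \<beta>\<^sup>2 * inf_norm_mat (matrix_inv (interp_mat y x \<Delta>))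
                          + L / 2 + (1 + sqrt (real CARD('n))) * inf_norm_mat (matrix_inv (interp_mat y x \<Delta>)) * \<epsilon>f;
                   \<kappa>mg = 2 * \<kappa>mf
               in \<bar>model F N y x \<Delta> \<omega> z - f z\<bar> \<le> \<kappa>mf * \<Delta>\<^sup>2 \<and>
                  norm (model_g F N y x \<Delta> \<omega> - gradf z) \<le> \<kappa>mg * \<Delta>"
      by (rule det_bound[OF deriv lip \<Delta> ypts inv \<epsilon>f err z])
  qed
qed

end
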